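(* Let $X$ be a metric space and $K$ a finite simplicial complex, realized in a simplex in some $\mathbb{R}^N$ and equipped with the induced metric. Then every uniformly continuous map $f:X\to K$ is a uniform limit of Lipschitz maps $g_k:X\to K$. *)

theory Defs
  imports "HOL-Analysis.Analysis"
begin

text \<open>A finite geometric simplicial complex realized in a simplex of a Euclidean space:
  the vertex set V is a finite affinely independent set (the vertices of the ambient simplex
  are V, or V is a subset of them), and the simplices form an abstract simplicial complex
  on V (nonempty subsets of V, closed under passing to nonempty faces).\<close>

definition simplicial_complex_in_simplex :: "'b::euclidean_space set \<Rightarrow> 'b set set \<Rightarrow> bool" where
  "simplicial_complex_in_simplex V S \<longleftrightarrow>
     finite V \<and> \<not> affine_dependent V \<and>
     (\<forall>s\<in>S. s \<noteq> {} \<and> s \<subseteq> V) \<and>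
     (\<forall>s\<in>S. \<forall>t. t \<noteq> {} \<and> t \<subseteq> s \<longrightarrow> t \<in> S)"

definition realization :: "'b::euclidean_space set set \<Rightarrow> 'b set" where
  "realization S = \<Union> ((\<lambda>s. convex hull s) ` S)"

end

theory Submission
  imports Defs
begin

lemma lip_approx:
  fixes h :: "'a::metric_space \<Rightarrow> real"
  assumes uc: "uniformly_continuous_on X h" and B: "\<forall>x\<in>X. \<bar>h x\<bar> \<le> B" and e: "e > 0"
  shows "\<exists>u C. C-lipschitz_on X u \<and> (\<forall>x\<in>X. \<bar>u x - h x\<bar> \<le> e)"
proof (cases "X = {}")
  case True then show ?thesis by (auto intro: exI[of _ 0])
next
  case False
  then obtain x0 where x0: "x0 \<in> X" by auto
  have B0: "0 \<le> B" using B x0 by force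
  obtain d where d: "d > 0" "\<forall>x\<in>X. \<forall>x'\<in>X. dist x' x < d \<longrightarrow> dist (h x') (h x) < e"
    using uc e unfolding uniformly_continuous_on_def by blast
  define k where "k = (2*B+1)/d"
  have k0: "k \<ge> 0" using d B0 by (simp add: k_def)
  have kd: "k * d = 2*B+1" using d by (simp add: k_def)
  define u where "u x = Inf ((\<lambda>y. h y + k * dist x y) ` X)" for x
  have bdd: "bdd_below ((\<lambda>y. h y + k * dist x y) ` X)" for x
  proof (rule bdd_belowI2[of _ "-B"])
    fix y assume "y \<in> X"
    then show "- B \<le> h y + k * dist x y" using B k0 by (smt (verit) zero_le_dist mult_nonneg_nonneg)
  qed
  have up: "u x \<le> h y + k * dist x y" if "y \<in> X" for x y
    unfolding u_def using that bdd by (intro cInf_lower) auto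
  have low: "c \<le> u x" if "\<And>y. y \<in> X \<Longrightarrow> c \<le> h y + k * dist x y" for c x
    unfolding u_def using that False by (intro cInf_greatest) auto
  have lip: "u x \<le> u x' + k * dist x x'" if "x \<in> X" "x' \<in> X" for x x'
  proof -
    have "u x - k * dist x x' \<le> u x'"
    proof (rule low)
      fix y assume y: "y \<in> X"
      have "dist x y \<le> dist x x' + dist x' y" by (rule dist_triangle)
      then have "k * dist x y \<le> k * dist x x' + k * dist x' y" using k0
        by (metis distrib_left mult_left_mono)
      then show "u x - k * dist x x' \<le> h y + k * dist x' y" using up[OF y, of x] by linarith
    qed
    then show ?thesis by linarith
  qed
  have "k-lipschitz_on X u"
  proof (rule lipschitz_onI)
    fix x y assume "x \<in> X" "y \<in> X"
    then show "dist (u x) (u y) \<le> k * dist x y"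
      using lip[of x y] lip[of y x] by (simp add: dist_real_def dist_commute abs_le_iff)
  qed (rule k0)
  moreover have "\<bar>u x - h x\<bar> \<le> e" if x: "x \<in> X" for x
  proof -
    have "u x \<le> h x" using up[OF x, of x] by simp
    moreover have "h x - e \<le> u x"
    proof (rule low)
      fix y assume y: "y \<in> X"
      show "h x - e \<le> h y + k * dist x y"
      proof (cases "dist x y < d")
        case True
        then have "dist (h y) (h x) < e" using d(2) x y by (simp add: dist_commute)
        then show ?thesis using k0 by (simp add: dist_real_def) (smt (verit) zero_le_dist mult_nonneg_nonneg)
      next
        case False
        then have "k * d \<le> k * dist x y" using k0 by (simp add: mult_left_mono)
        then show ?thesis using kd B x y e by (smt (verit))
      qed
    qed
    ultimately show ?thesis by simp
  qed
  ultimately show ?thesis by blast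
qed

lemma bary:
  fixes V :: "'b::euclidean_space set"
  assumes "\<not> affine_dependent V" "v \<in> V"
  shows "\<exists>c l. linear l \<and> (\<forall>w\<in>V. c + l w = (if w = v then 1 else (0::real)))"
proof -
  have V: "V = insert v (V - {v})" using assms by auto
  have "\<not> dependent ((\<lambda>x. -v + x) ` (V - {v}))"
    using assms(1) affine_dependent_iff_dependent[of v "V - {v}"] V by auto
  then obtain l :: "'b \<Rightarrow> real" where l: "linear l" "\<forall>x\<in>(\<lambda>x. -v + x) ` (V - {v}). l x = -1"
    using linear_independent_extend[of "(\<lambda>x. -v + x) ` (V - {v})" "\<lambda>_. -1"] by blast
  have "\<forall>w\<in>V. (1 - l v) + l w = (if w = v then 1 else 0)"
  proof
    fix w assume w: "w \<in> V"
    show "(1 - l v) + l w = (if w = v then 1 else 0)"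
    proof (cases "w = v")
      case False
      then have "l (-v + w) = -1" using l(2) w by auto
      then show ?thesis using False linear_diff[OF l(1), of w v] by simp
    qed simp
  qed
  then show ?thesis using l(1) by blast
qed

lemma lip_sum:
  fixes f :: "'i \<Rightarrow> 'a::metric_space \<Rightarrow> 'b::real_normed_vector"
  assumes "finite I" "\<forall>i\<in>I. \<exists>C. C-lipschitz_on X (f i)"
  shows "\<exists>C. C-lipschitz_on X (\<lambda>x. \<Sum>i\<in>I. f i x)"
  using assms
proof (induction I rule: finite_induct)
  case empty then show ?case using lipschitz_on_constant by auto
next
  case (insert a F)
  then obtain C D where "C-lipschitz_on X (f a)" "D-lipschitz_on X (\<lambda>x. \<Sum>i\<in>F. f i x)" by auto
  then show ?case using insert lipschitz_on_add by fastforce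
qed

lemma lip_scaleR:
  fixes r :: "'a::metric_space \<Rightarrow> real" and v :: "'b::real_normed_vector"
  assumes "C-lipschitz_on X r"
  shows "(C * norm v)-lipschitz_on X (\<lambda>x. r x *\<^sub>R v)"
proof (rule lipschitz_onI)
  fix x y assume "x \<in> X" "y \<in> X"
  then have "\<bar>r x - r y\<bar> \<le> C * dist x y" using lipschitz_onD[OF assms] by (simp add: dist_real_def)
  then have "\<bar>r x - r y\<bar> * norm v \<le> C * dist x y * norm v" by (simp add: mult_right_mono)
  then show "dist (r x *\<^sub>R v) (r y *\<^sub>R v) \<le> C * norm v * dist x y"
    by (simp add: dist_norm scaleR_diff_left[symmetric] mult_ac)
qed (use lipschitz_on_nonneg[OF assms] in simp)

lemma lip_div:
  fixes u W :: "'a::metric_space \<Rightarrow> real"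
  assumes "A-lipschitz_on X u" "D-lipschitz_on X W" "\<forall>x\<in>X. \<bar>u x\<bar> \<le> M" "\<forall>x\<in>X. W x \<ge> c" "c > 0"
  shows "\<exists>C. C-lipschitz_on X (\<lambda>x. u x / W x)"
proof -
  have A0: "A \<ge> 0" "D \<ge> 0" using assms lipschitz_on_nonneg by blast+
  have "(A / c + \<bar>M\<bar> * D / c^2)-lipschitz_on X (\<lambda>x. u x / W x)"
  proof (rule lipschitz_onI)
    fix x y assume x: "x \<in> X" and y: "y \<in> X"
    have Wx: "W x \<ge> c" and Wy: "W y \<ge> c" using assms x y by auto
    have du: "\<bar>u x - u y\<bar> \<le> A * dist x y" using lipschitz_onD[OF assms(1) x y] by (simp add: dist_real_def)
    have dW: "\<bar>W y - W x\<bar> \<le> D * dist x y" using lipschitz_onD[OF assms(2) y x] by (simp add: dist_real_def dist_commute)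
    have eq: "u x / W x - u y / W y = (u x - u y) / W x + u y * (W y - W x) / (W x * W y)"
      using Wx Wy assms(5) by (simp add: field_simps)
    have t1: "\<bar>(u x - u y) / W x\<bar> \<le> A * dist x y / c"
    proof -
      have "\<bar>(u x - u y) / W x\<bar> = \<bar>u x - u y\<bar> / W x" using Wx assms(5) by simp
      also have "\<dots> \<le> \<bar>u x - u y\<bar> / c" using Wx assms(5) by (simp add: divide_left_mono)
      also have "\<dots> \<le> A * dist x y / c" using du assms(5) by (simp add: divide_right_mono)
      finally show ?thesis .
    qed
    have t2: "\<bar>u y * (W y - W x) / (W x * W y)\<bar> \<le> \<bar>M\<bar> * (D * dist x y) / c^2"
    proof -
      have "\<bar>u y * (W y - W x) / (W x * W y)\<bar> = \<bar>u y\<bar> * \<bar>W y - W x\<bar> / (W x * W y)"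
        using Wx Wy assms(5) by (simp add: abs_mult)
      also have "\<dots> \<le> \<bar>u y\<bar> * \<bar>W y - W x\<bar> / c^2"
      proof (rule divide_left_mono)
        show "c^2 \<le> W x * W y" using Wx Wy assms(5) by (simp add: power2_eq_square mult_mono)
      next
        have p: "0 < W x" "0 < W y" using Wx Wy assms(5) by linarith+
        show "0 < W x * W y * c^2" using p assms(5) by (intro mult_pos_pos) auto
      qed (use assms(5) in auto)
      also have "\<dots> \<le> \<bar>M\<bar> * (D * dist x y) / c^2"
        using assms(3) y dW by (intro divide_right_mono mult_mono) auto
      finally show ?thesis .
    qed
    have "dist (u x / W x) (u y / W y) \<le> A * dist x y / c + \<bar>M\<bar> * (D * dist x y) / c^2"
      unfolding dist_real_def eq using t1 t2 abs_triangle_ineq[of "(u x - u y) / W x" "u y * (W y - W x) / (W x * W y)"] by linarith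
    then show "dist (u x / W x) (u y / W y) \<le> (A / c + \<bar>M\<bar> * D / c^2) * dist x y"
      by (simp add: algebra_simps)
  qed (use A0 assms(5) in auto)
  then show ?thesis by blast
qed


lemma approx_step:
  fixes X :: "'a::metric_space set" and V :: "'b::euclidean_space set"
    and S :: "'b set set" and f :: "'a \<Rightarrow> 'b"
  assumes sc: "simplicial_complex_in_simplex V S" and fX: "f ` X \<subseteq> realization S"
    and uc: "uniformly_continuous_on X f" and ep: "\<epsilon> > 0"
  shows "\<exists>g. (\<exists>C. C-lipschitz_on X g) \<and> g ` X \<subseteq> realization S \<and> (\<forall>x\<in>X. dist (g x) (f x) \<le> \<epsilon>)"
proof (cases "X = {}")
  case True then show ?thesis by (auto intro!: exI[of _ f] exI[of _ 0])
next
  case False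
  have finV: "finite V" and indV: "\<not> affine_dependent V" and Ssub: "\<forall>s\<in>S. s \<noteq> {} \<and> s \<subseteq> V"
    using sc by (auto simp: simplicial_complex_in_simplex_def)
  have "\<forall>v\<in>V. \<exists>c l. linear l \<and> (\<forall>w\<in>V. c + l w = (if w = v then 1 else (0::real)))"
    using bary[OF indV] by blast
  then have "\<exists>c. \<forall>v\<in>V. \<exists>l. linear l \<and> (\<forall>w\<in>V. c v + l w = (if w = v then 1 else (0::real)))"
    by (rule bchoice)
  then obtain c where "\<forall>v\<in>V. \<exists>l. linear l \<and> (\<forall>w\<in>V. c v + l w = (if w = v then 1 else (0::real)))"
    by blast
  then have "\<exists>l. \<forall>v\<in>V. linear (l v) \<and> (\<forall>w\<in>V. c v + l v w = (if w = v then 1 else (0::real)))"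
    by (rule bchoice)
  then obtain l where cl: "\<And>v. v\<in>V \<Longrightarrow> linear (l v) \<and> (\<forall>w\<in>V. c v + l v w = (if w = v then 1 else (0::real)))"
    by blast
  define lam where "lam v p = c v + l v p" for v p
  have aff: "lam v (\<Sum>w\<in>s. \<mu> w *\<^sub>R w) = (\<Sum>w\<in>s. \<mu> w * lam v w)"
    if vV: "v \<in> V" and s1: "sum \<mu> s = 1" for v s \<mu>
  proof -
    have lin: "linear (l v)" using conjunct1[OF cl[OF vV]] .
    have A: "l v (\<Sum>w\<in>s. \<mu> w *\<^sub>R w) = (\<Sum>w\<in>s. \<mu> w * l v w)"
      by (simp add: linear_sum[OF lin] linear_scale[OF lin])
    have B: "(\<Sum>w\<in>s. \<mu> w * (c v + l v w)) = sum \<mu> s * c v + (\<Sum>w\<in>s. \<mu> w * l v w)"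
      by (simp add: distrib_left sum.distrib sum_distrib_right)
    show ?thesis unfolding lam_def A B s1 by simp
  qed
  have K1: "\<exists>s\<in>S. (\<forall>v\<in>V. 0 \<le> lam v p \<and> (lam v p \<noteq> 0 \<longrightarrow> v \<in> s)) \<and> sum (\<lambda>v. lam v p) V = 1
            \<and> p = (\<Sum>v\<in>V. lam v p *\<^sub>R v)" if pK: "p \<in> realization S" for p
  proof -
    obtain s where s: "s \<in> S" "p \<in> convex hull s" using pK unfolding realization_def by blast
    have sV: "s \<subseteq> V" using Ssub s by auto
    have fins: "finite s" using sV finV finite_subset by blast
    obtain \<mu> where mu: "\<forall>x\<in>s. 0 \<le> \<mu> x" "sum \<mu> s = 1" "(\<Sum>x\<in>s. \<mu> x *\<^sub>R x) = p"
      using s(2) convex_hull_finite[OF fins] by auto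
    have lv: "lam v p = (if v \<in> s then \<mu> v else 0)" if v: "v \<in> V" for v
    proof -
      have "lam v p = (\<Sum>w\<in>s. \<mu> w * lam v w)" using aff[OF v mu(2)] mu(3) by simp
      also have "\<dots> = (\<Sum>w\<in>s. if w = v then \<mu> w else 0)"
        using sV cl[OF v] by (intro sum.cong) (auto simp: lam_def)
      also have "\<dots> = (if v \<in> s then \<mu> v else 0)" using fins by (simp add: sum.delta')
      finally show ?thesis .
    qed
    have "sum (\<lambda>v. lam v p) V = (\<Sum>v\<in>V. if v \<in> s then \<mu> v else 0)" using lv by (intro sum.cong) auto
    also have "\<dots> = sum \<mu> (V \<inter> s)" using finV by (simp add: sum.inter_restrict)
    also have "V \<inter> s = s" using sV by auto
    finally have sum1: "sum (\<lambda>v. lam v p) V = 1" using mu(2) by simp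
    have "(\<Sum>v\<in>V. lam v p *\<^sub>R v) = (\<Sum>v\<in>V. if v \<in> s then \<mu> v *\<^sub>R v else 0)" using lv by (intro sum.cong) auto
    also have "\<dots> = (\<Sum>v\<in>V \<inter> s. \<mu> v *\<^sub>R v)" using finV by (simp add: sum.inter_restrict)
    also have "V \<inter> s = s" using sV by auto
    finally have "p = (\<Sum>v\<in>V. lam v p *\<^sub>R v)" using mu(3) by simp
    then show ?thesis using s(1) sum1 lv mu(1) by (intro bexI[of _ s]) auto
  qed

  have lam01: "0 \<le> lam v p \<and> lam v p \<le> 1" if pv: "p \<in> realization S" "v \<in> V" for p v
  proof -
    obtain s where "\<forall>v\<in>V. 0 \<le> lam v p" "sum (\<lambda>v. lam v p) V = 1" using K1[OF pv(1)] by blast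
    then show ?thesis using pv(2) finV member_le_sum[of v V "\<lambda>v. lam v p"] by auto
  qed
  obtain x0 where x0: "x0 \<in> X" using False by auto
  obtain s0 where "s0 \<in> S" "f x0 \<in> convex hull s0" using fX x0 unfolding realization_def by blast
  then have "V \<noteq> {}" using Ssub by blast
  define n where "n = card V"
  have n1: "real n \<ge> 1" using \<open>V \<noteq> {}\<close> finV by (simp add: n_def Suc_le_eq card_gt_0_iff)
  define M where "M = (\<Sum>v\<in>V. norm v)"
  have M0: "M \<ge> 0" by (simp add: M_def sum_nonneg)
  define \<eta> where "\<eta> = min (1/(4*n)) (\<epsilon>/(6*n*(M+1)))"
  have eta0: "\<eta> > 0" using n1 M0 ep by (simp add: \<eta>_def)
  have eta1: "2 * n * \<eta> \<le> 1/2"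
  proof -
    have "\<eta> \<le> 1/(4*n)" by (simp add: \<eta>_def)
    then have "n * \<eta> \<le> n * (1/(4*n))" using n1 by (intro mult_left_mono) auto
    then show ?thesis using n1 by simp
  qed
  have eta2: "6 * n * \<eta> * M \<le> \<epsilon>"
  proof -
    have "\<eta> \<le> \<epsilon>/(6*n*(M+1))" by (simp add: \<eta>_def)
    then have "6*n*(M+1) * \<eta> \<le> \<epsilon>" using n1 M0 by (simp add: pos_le_divide_eq mult.commute)
    moreover have "6 * n * \<eta> * M \<le> 6*n*(M+1) * \<eta>" using n1 eta0 by (simp add: algebra_simps)
    ultimately show ?thesis by linarith
  qed
  have uch: "uniformly_continuous_on X (\<lambda>x. lam v (f x))" if v: "v \<in> V" for v
  proof -
    have "bounded_linear (l v)" using cl[OF v] linear_conv_bounded_linear by blast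
    then obtain B where "B-lipschitz_on UNIV (l v)" by (rule bounded_linear.lipschitz_boundE)
    then have "(0+B)-lipschitz_on UNIV (\<lambda>x. c v + l v x)"
      by (intro lipschitz_on_add lipschitz_on_constant)
    then have "(0+B)-lipschitz_on (f ` X) (lam v)" unfolding lam_def[abs_def]
      by (rule lipschitz_on_subset) simp
    then have "uniformly_continuous_on (f ` X) (lam v)"
      by (rule lipschitz_on_uniformly_continuous)
    from uniformly_continuous_on_compose[OF uc this] show ?thesis by (simp add: o_def)
  qed
  have "\<forall>v\<in>V. \<exists>u. (\<exists>C. C-lipschitz_on X u) \<and> (\<forall>x\<in>X. \<bar>u x - lam v (f x)\<bar> \<le> \<eta>)"
  proof
    fix v assume v: "v \<in> V"
    have "\<forall>x\<in>X. \<bar>lam v (f x)\<bar> \<le> 1" using lam01 fX v by fastforce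
    then show "\<exists>u. (\<exists>C. C-lipschitz_on X u) \<and> (\<forall>x\<in>X. \<bar>u x - lam v (f x)\<bar> \<le> \<eta>)"
      using lip_approx[OF uch[OF v] _ eta0] by blast
  qed
  then have "\<exists>u. \<forall>v\<in>V. (\<exists>C. C-lipschitz_on X (u v)) \<and> (\<forall>x\<in>X. \<bar>u v x - lam v (f x)\<bar> \<le> \<eta>)"
    by (rule bchoice)
  then obtain u where u: "\<And>v. v \<in> V \<Longrightarrow> (\<exists>C. C-lipschitz_on X (u v)) \<and> (\<forall>x\<in>X. \<bar>u v x - lam v (f x)\<bar> \<le> \<eta>)"
    by blast
  define w where "w v x = max 0 (u v x - \<eta>)" for v x
  have wlip: "\<exists>C. C-lipschitz_on X (w v)" if v: "v \<in> V" for v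
  proof -
    obtain C where C: "C-lipschitz_on X (u v)" using u[OF v] by blast
    have "C-lipschitz_on X (w v)"
    proof (rule lipschitz_onI)
      fix x y assume "x \<in> X" "y \<in> X"
      then have "\<bar>u v x - u v y\<bar> \<le> C * dist x y" using lipschitz_onD[OF C] by (simp add: dist_real_def)
      then show "dist (w v x) (w v y) \<le> C * dist x y" by (simp add: w_def dist_real_def)
    qed (use lipschitz_on_nonneg[OF C] in simp)
    then show ?thesis by blast
  qed
  have wprops: "0 \<le> w v x \<and> w v x \<le> lam v (f x) \<and> lam v (f x) - 2*\<eta> \<le> w v x \<and> w v x \<le> 1"
    if "v \<in> V" "x \<in> X" for v x
  proof -
    have "\<bar>u v x - lam v (f x)\<bar> \<le> \<eta>" using u that by blast
    moreover have "0 \<le> lam v (f x) \<and> lam v (f x) \<le> 1" using lam01 fX that by blast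
    ultimately show ?thesis by (auto simp: w_def)
  qed
  define W where "W x = (\<Sum>v\<in>V. w v x)" for x
  have Wlip: "\<exists>C. C-lipschitz_on X W" unfolding W_def[abs_def] using lip_sum[OF finV] wlip by blast
  have Wb: "1 - 2*n*\<eta> \<le> W x \<and> W x \<le> 1" if x: "x \<in> X" for x
  proof -
    have s1: "sum (\<lambda>v. lam v (f x)) V = 1" using K1 fX x by blast
    have "W x \<le> sum (\<lambda>v. lam v (f x)) V" unfolding W_def using wprops x by (intro sum_mono) auto
    moreover have "(\<Sum>v\<in>V. lam v (f x) - 2*\<eta>) \<le> W x" unfolding W_def using wprops x by (intro sum_mono) auto
    moreover have "(\<Sum>v\<in>V. lam v (f x) - 2*\<eta>) = 1 - 2*n*\<eta>" using s1 by (simp add: sum_subtractf n_def)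
    ultimately show ?thesis using s1 by simp
  qed
  have Wh: "W x \<ge> 1/2" if "x \<in> X" for x using Wb[OF that] eta1 by linarith
  define g where "g x = (\<Sum>v\<in>V. (w v x / W x) *\<^sub>R v)" for x
  have glip: "\<exists>C. C-lipschitz_on X g"
  proof -
    obtain D where D: "D-lipschitz_on X W" using Wlip by blast
    have "\<exists>C. C-lipschitz_on X (\<lambda>x. (w v x / W x) *\<^sub>R v)" if v: "v \<in> V" for v
    proof -
      obtain A where A: "A-lipschitz_on X (w v)" using wlip[OF v] by blast
      obtain C where "C-lipschitz_on X (\<lambda>x. w v x / W x)"
        using lip_div[OF A D, of 1 "1/2"] wprops[OF v] Wh by auto
      then show ?thesis using lip_scaleR by blast
    qed
    then show ?thesis unfolding g_def[abs_def] using lip_sum[OF finV, of X "\<lambda>v x. (w v x / W x) *\<^sub>R v"] by blast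
  qed
  have gK: "g x \<in> realization S" if x: "x \<in> X" for x
  proof -
    obtain s where s: "s \<in> S" "\<forall>v\<in>V. 0 \<le> lam v (f x) \<and> (lam v (f x) \<noteq> 0 \<longrightarrow> v \<in> s)"
      using K1 fX x by blast
    have sV: "s \<subseteq> V" using Ssub s by auto
    have fins: "finite s" using sV finV finite_subset by blast
    have w0: "w v x = 0" if "v \<in> V - s" for v
      using wprops[of v x] s(2) that x by fastforce
    have Wpos: "W x > 0" using Wh[OF x] by linarith
    have e1: "W x = (\<Sum>v\<in>s. w v x)" unfolding W_def using w0 sV finV by (intro sum.mono_neutral_right) auto
    have e2: "g x = (\<Sum>v\<in>s. (w v x / W x) *\<^sub>R v)" unfolding g_def using w0 sV finV
      by (intro sum.mono_neutral_right) auto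
    have "(\<Sum>v\<in>s. w v x / W x) = 1" using e1 Wpos by (simp add: sum_divide_distrib[symmetric])
    then have "g x \<in> convex hull s" unfolding convex_hull_finite[OF fins] using e2 wprops x sV Wpos
      by (intro CollectI exI[of _ "\<lambda>v. w v x / W x"]) auto
    then show ?thesis using s(1) unfolding realization_def by blast
  qed
  have gd: "dist (g x) (f x) \<le> \<epsilon>" if x: "x \<in> X" for x
  proof -
    have fx: "f x = (\<Sum>v\<in>V. lam v (f x) *\<^sub>R v)" using K1 fX x by blast
    have coef: "\<bar>w v x / W x - lam v (f x)\<bar> \<le> 6*n*\<eta>" if v: "v \<in> V" for v
    proof -
      have wp: "0 \<le> w v x" "w v x \<le> lam v (f x)" "lam v (f x) - 2*\<eta> \<le> w v x" "w v x \<le> 1"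
        using wprops[OF v x] by auto
      have Wx: "1 - 2*n*\<eta> \<le> W x" "W x \<le> 1" "W x \<ge> 1/2" using Wb[OF x] Wh[OF x] by auto
      have a: "w v x \<le> w v x / W x" using wp Wx by (simp add: le_divide_eq mult_left_le)
      have b: "w v x / W x \<le> w v x + 4*n*\<eta>"
      proof -
        have "w v x * (1 - W x) \<le> 1 - W x" using wp Wx by (simp add: mult_left_le_one_le)
        then have i1: "w v x - w v x * W x \<le> 1 - W x" by (simp add: algebra_simps)
        have nn: "0 \<le> 4*n*\<eta>" using eta0 n1 by simp
        have "4*n*\<eta> * (1/2) \<le> 4*n*\<eta> * W x" using Wx(3) nn by (rule mult_left_mono)
        then have i2: "2*n*\<eta> \<le> 4*n*\<eta> * W x" by simp
        have "(w v x + 4*n*\<eta>) * W x = w v x * W x + 4*n*\<eta> * W x" by (simp add: algebra_simps)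
        then have "w v x \<le> (w v x + 4*n*\<eta>) * W x" using i1 i2 Wx(1) by linarith
        then show ?thesis using Wx by (simp add: divide_le_eq)
      qed
      have "1 * \<eta> \<le> real n * \<eta>" using n1 eta0 by (intro mult_right_mono) auto
      then have h: "\<eta> \<le> real n * \<eta>" by simp
      show ?thesis unfolding abs_le_iff using a b wp h eta0 by linarith
    qed
    have "g x - f x = (\<Sum>v\<in>V. (w v x / W x - lam v (f x)) *\<^sub>R v)"
      unfolding g_def by (subst fx) (simp add: sum_subtractf[symmetric] scaleR_diff_left)
    then have "dist (g x) (f x) = norm (\<Sum>v\<in>V. (w v x / W x - lam v (f x)) *\<^sub>R v)" by (simp add: dist_norm)
    also have "\<dots> \<le> (\<Sum>v\<in>V. norm ((w v x / W x - lam v (f x)) *\<^sub>R v))" by (rule norm_sum)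
    also have "\<dots> \<le> (\<Sum>v\<in>V. 6*n*\<eta> * norm v)" using coef by (intro sum_mono) (simp add: mult_right_mono)
    also have "\<dots> = 6*n*\<eta> * M" by (simp add: M_def sum_distrib_left)
    finally show ?thesis using eta2 by linarith
  qed
  show ?thesis using glip gK gd by blast
qed


theorem corollary3p7:
  fixes X :: "'a::metric_space set"
    and V :: "'b::euclidean_space set"
    and S :: "'b set set"
    and f :: "'a \<Rightarrow> 'b"
  assumes "simplicial_complex_in_simplex V S"
    and "f ` X \<subseteq> realization S"
    and "uniformly_continuous_on X f"
  shows "\<exists>g :: nat \<Rightarrow> 'a \<Rightarrow> 'b.
           (\<forall>k. (\<exists>C. lipschitz_on C X (g k)) \<and> g k ` X \<subseteq> realization S) \<and>
           uniform_limit X g f sequentially"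
proof -
  have "\<forall>k::nat. \<exists>h. (\<exists>C. C-lipschitz_on X h) \<and> h ` X \<subseteq> realization S \<and>
          (\<forall>x\<in>X. dist (h x) (f x) \<le> 1 / (real k + 1))"
    using approx_step[OF assms] by simp
  then have "\<exists>g. \<forall>k::nat. (\<exists>C. C-lipschitz_on X (g k)) \<and> g k ` X \<subseteq> realization S \<and>
          (\<forall>x\<in>X. dist (g k x) (f x) \<le> 1 / (real k + 1))"
    by (rule choice)
  then obtain g where g: "\<And>k::nat. (\<exists>C. C-lipschitz_on X (g k)) \<and> g k ` X \<subseteq> realization S \<and>
          (\<forall>x\<in>X. dist (g k x) (f x) \<le> 1 / (real k + 1))" by blast
  have "uniform_limit X g f sequentially"
    unfolding uniform_limit_iff
  proof (intro allI impI)
    fix e :: real assume e: "e > 0"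
    obtain N :: nat where N: "inverse (real (Suc N)) < e" using reals_Archimedean[OF e] by blast
    show "\<forall>\<^sub>F n in sequentially. \<forall>x\<in>X. dist (g n x) (f x) < e"
    proof (rule eventually_sequentiallyI[of N])
      fix n assume n: "N \<le> n"
      have "1 / (real n + 1) \<le> 1 / (real N + 1)" using n by (simp add: frac_le)
      also have "\<dots> < e" using N by (simp add: inverse_eq_divide add.commute)
      finally have "1 / (real n + 1) < e" .
      then show "\<forall>x\<in>X. dist (g n x) (f x) < e" using g[of n] by fastforce
    qed
  qed
  then show ?thesis using g by blast
qed

end
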